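(* Let $Y$ be a non-negative integer-valued random variable with finite second moment. For $t\ge 0$ let $m_Y(t)=\mathbb{E}[Y-t\mid Y>t]$ (defined when $\mathbb{P}(Y>t)>0$). If \[ m_Y(t)\ge \mathbb{E}[Y]+\tfrac12\quad\text{for all } t\ge 0, \] then $\sqrt{\tfrac12\mathbb{E}[Y^2]}\ge\mathbb{E}[Y]$. Likewise, if $m_Y(t)\le\mathbb{E}[Y]+\tfrac12$ for all $t\ge0$, then $\sqrt{\tfrac12\mathbb{E}[Y^2]}\le\mathbb{E}[Y]$.
   Context: In the discrete setting the mean excess function is the genuine conditional expectation, so $m_Y(0)=\mathbb{E}[Y\mid Y>0]\ge\mathbb{E}[Y]$. *)

theory Defs
  imports "HOL-Probability.Probability"
begin

text \<open>Mean excess function of a nat-valued random variable Y on the measure space M: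
  m_Y(t) = E[Y - t | Y > t] = E[(Y - t) 1{Y > t}] / P(Y > t).
  Only meaningful when P(Y > t) > 0.\<close>
definition mean_excess :: "'a measure \<Rightarrow> ('a \<Rightarrow> nat) \<Rightarrow> real \<Rightarrow> real" where
  "mean_excess M Y t =
     (\<integral>x. (real (Y x) - t) * indicator {x \<in> space M. real (Y x) > t} x \<partial>M)
       / measure M {x \<in> space M. real (Y x) > t}"

end

theory Submission
  imports Defs
begin

lemma sums_integral_nonneg:
  fixes g :: "nat \<Rightarrow> 'a \<Rightarrow> real"
  assumes gi: "\<And>t. integrable M (g t)" and gnn: "\<And>t x. 0 \<le> g t x"
    and gs: "\<And>x. x \<in> space M \<Longrightarrow> (\<lambda>t. g t x) sums G x"
    and Gi: "integrable M G"
  shows "(\<lambda>t. integral\<^sup>L M (g t)) sums (integral\<^sup>L M G)"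
proof -
  have Gnn: "\<And>x. x \<in> space M \<Longrightarrow> 0 \<le> G x"
    using sums_le[OF _ sums_zero gs] gnn by blast
  have "ennreal (integral\<^sup>L M G) = (\<integral>\<^sup>+x. ennreal (G x) \<partial>M)"
    using Gi Gnn by (simp add: nn_integral_eq_integral)
  also have "\<dots> = (\<integral>\<^sup>+x. (\<Sum>t. ennreal (g t x)) \<partial>M)"
  proof (rule nn_integral_cong)
    fix x assume x: "x \<in> space M"
    have "(\<lambda>t. ennreal (g t x)) sums ennreal (G x)"
      using gs[OF x] gnn Gnn[OF x] by simp
    then show "ennreal (G x) = (\<Sum>t. ennreal (g t x))" by (simp add: sums_iff)
  qed
  also have "\<dots> = (\<Sum>t. \<integral>\<^sup>+x. ennreal (g t x) \<partial>M)"
    using gi by (intro nn_integral_suminf) auto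
  also have "\<dots> = (\<Sum>t. ennreal (integral\<^sup>L M (g t)))"
    using gi gnn by (simp add: nn_integral_eq_integral)
  finally have "(\<lambda>t. ennreal (integral\<^sup>L M (g t))) sums ennreal (integral\<^sup>L M G)"
    by (metis summable_sums summableI)
  then show ?thesis
    using gnn Gnn by (subst (asm) sums_ennreal) (auto intro: integral_nonneg_AE)
qed

lemma sum_nat_aux: "(\<Sum>t<n. real t) * 2 = real n * (real n - 1)"
  by (induction n) (auto simp: algebra_simps)

lemma sum_tri: "(\<Sum>t<n. (real n - real t)) = (real n * real n + real n) / 2"
proof -
  have "(\<Sum>t<n. (real n - real t)) = real n * real n - (\<Sum>t<n. real t)"
    by (simp add: sum_subtractf)
  then show ?thesis using sum_nat_aux[of n] by (simp add: algebra_simps)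
qed

lemma aux_bound: "real (n::nat) - real t * 2 \<le> real n * real n"
proof -
  have "real n \<le> real n * real n"
    by (cases n) (auto simp: algebra_simps)
  then show ?thesis by simp
qed

theorem proposition10:
  fixes M :: "'a measure" and Y :: "'a \<Rightarrow> nat"
  assumes "prob_space M"
    and "Y \<in> M \<rightarrow>\<^sub>M count_space UNIV"
    and "integrable M (\<lambda>x. (real (Y x))\<^sup>2)"
  shows "((\<forall>t::nat. measure M {x \<in> space M. Y x > t} > 0 \<longrightarrow>
              mean_excess M Y (real t) \<ge> (\<integral>x. real (Y x) \<partial>M) + 1/2)
           \<longrightarrow> sqrt ((\<integral>x. (real (Y x))\<^sup>2 \<partial>M) / 2) \<ge> (\<integral>x. real (Y x) \<partial>M))
       \<and> ((\<forall>t::nat. measure M {x \<in> space M. Y x > t} > 0 \<longrightarrow>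
              mean_excess M Y (real t) \<le> (\<integral>x. real (Y x) \<partial>M) + 1/2)
           \<longrightarrow> sqrt ((\<integral>x. (real (Y x))\<^sup>2 \<partial>M) / 2) \<le> (\<integral>x. real (Y x) \<partial>M))"
proof -
  interpret prob_space M by fact
  have Ym[measurable]: "Y \<in> measurable M (count_space UNIV)" using assms(2) by simp
  have Yr[measurable]: "(\<lambda>x. real (Y x)) \<in> borel_measurable M" by measurable
  have Y2i: "integrable M (\<lambda>x. (real (Y x))\<^sup>2)" by fact
  have Yi: "integrable M (\<lambda>x. real (Y x))"
    using square_integrable_imp_integrable[OF Yr Y2i] .
  define S where "S t = {x \<in> space M. real (Y x) > real t}" for t :: nat
  have S_eq: "{x \<in> space M. Y x > t} = S t" for t by (simp add: S_def)
  have Ss[measurable]: "S t \<in> sets M" for t unfolding S_def by measurable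
  define g where "g t x = (real (Y x) - real t) * indicator (S t) x" for t x
  define h where "h t x = (indicator (S t) x :: real)" for t x
  define \<mu> where "\<mu> = (\<integral>x. real (Y x) \<partial>M)"
  define Q where "Q = (\<integral>x. (real (Y x))\<^sup>2 \<partial>M)"
  have gnn: "0 \<le> g t x" for t x by (auto simp: g_def S_def indicator_def)
  have gm[measurable]: "g t \<in> borel_measurable M" for t unfolding g_def by measurable
  have hm[measurable]: "h t \<in> borel_measurable M" for t unfolding h_def by measurable
  have Gi: "integrable M (\<lambda>x. ((real (Y x))\<^sup>2 + real (Y x)) / 2)"
    using Y2i Yi by auto
  have gi: "integrable M (g t)" for t
  proof (rule Bochner_Integration.integrable_bound[OF Gi gm])
    show "AE x in M. norm (g t x) \<le> norm (((real (Y x))\<^sup>2 + real (Y x)) / 2)"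
      by (intro AE_I2) (auto simp: g_def S_def indicator_def power2_eq_square aux_bound)
  qed
  have hi: "integrable M (h t)" for t
    unfolding h_def using Ss[of t] by (simp add: emeasure_eq_measure)
  have gsum: "(\<lambda>t. integral\<^sup>L M (g t)) sums ((Q + \<mu>) / 2)"
  proof -
    have "(\<lambda>t. integral\<^sup>L M (g t)) sums (\<integral>x. ((real (Y x))\<^sup>2 + real (Y x)) / 2 \<partial>M)"
    proof (rule sums_integral_nonneg[OF gi gnn _ Gi])
      fix x assume x: "x \<in> space M"
      have "(\<lambda>t. g t x) sums (\<Sum>t\<in>{..<Y x}. g t x)"
        by (rule sums_finite) (auto simp: g_def S_def)
      moreover have "(\<Sum>t\<in>{..<Y x}. g t x) = (\<Sum>t<Y x. real (Y x) - real t)"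
        by (rule sum.cong) (auto simp: g_def S_def x)
      ultimately show "(\<lambda>t. g t x) sums (((real (Y x))\<^sup>2 + real (Y x)) / 2)"
        by (simp add: sum_tri power2_eq_square)
    qed
    also have "(\<integral>x. ((real (Y x))\<^sup>2 + real (Y x)) / 2 \<partial>M) = (Q + \<mu>) / 2"
      using Y2i Yi by (simp add: Q_def \<mu>_def)
    finally show ?thesis .
  qed
  have hsum: "(\<lambda>t. measure M (S t)) sums \<mu>"
  proof -
    have "(\<lambda>t. integral\<^sup>L M (h t)) sums (\<integral>x. real (Y x) \<partial>M)"
    proof (rule sums_integral_nonneg[OF hi _ _ Yi])
      show "0 \<le> h t x" for t x by (simp add: h_def)
      fix x assume x: "x \<in> space M"
      have "(\<lambda>t. h t x) sums (\<Sum>t\<in>{..<Y x}. h t x)"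
        by (rule sums_finite) (auto simp: h_def S_def)
      moreover have "(\<Sum>t\<in>{..<Y x}. h t x) = (\<Sum>t<Y x. 1)"
        by (rule sum.cong) (auto simp: h_def S_def x)
      ultimately show "(\<lambda>t. h t x) sums (real (Y x))" by simp
    qed
    moreover have "integral\<^sup>L M (h t) = measure M (S t)" for t
    proof -
      have "S t \<inter> space M = S t" by (auto simp: S_def)
      moreover have "h t = indicator (S t)" by (rule ext) (simp add: h_def)
      ultimately show ?thesis by simp
    qed
    ultimately show ?thesis by (simp add: \<mu>_def)
  qed
  have me: "mean_excess M Y (real t) = integral\<^sup>L M (g t) / measure M (S t)" for t
    unfolding mean_excess_def g_def S_def by simp
  have zero: "integral\<^sup>L M (g t) = 0" if "measure M (S t) = 0" for t
  proof -
    have "S t \<in> null_sets M" using that Ss[of t] by (simp add: null_sets_def emeasure_eq_measure)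
    then have "AE x in M. g t x = 0"
      by (rule AE_mp[OF AE_not_in]) (auto simp: g_def)
    then show ?thesis by (simp add: integral_cong_AE[of _ _ "\<lambda>_. 0"])
  qed
  have \<mu>nn: "0 \<le> \<mu>" unfolding \<mu>_def by (rule integral_nonneg_AE) auto
  have csum: "(\<lambda>t. (\<mu> + 1/2) * measure M (S t)) sums ((\<mu> + 1/2) * \<mu>)"
    using hsum by (rule sums_mult)
  show ?thesis
  proof (intro conjI impI)
    assume H: "\<forall>t::nat. measure M {x \<in> space M. Y x > t} > 0 \<longrightarrow>
              mean_excess M Y (real t) \<ge> (\<integral>x. real (Y x) \<partial>M) + 1/2"
    have "(\<mu> + 1/2) * measure M (S t) \<le> integral\<^sup>L M (g t)" for t
    proof (cases "measure M (S t) = 0")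
      case True then show ?thesis by (simp add: zero)
    next
      case False
      then have "measure M (S t) > 0" using measure_nonneg[of M "S t"] by linarith
      with H[rule_format, of t] show ?thesis by (simp add: S_eq me \<mu>_def pos_le_divide_eq)
    qed
    then have "(\<mu> + 1/2) * \<mu> \<le> (Q + \<mu>) / 2" using sums_le[OF _ csum gsum] by blast
    then have "\<mu>\<^sup>2 \<le> Q / 2" by (simp add: power2_eq_square algebra_simps)
    then show "sqrt ((\<integral>x. (real (Y x))\<^sup>2 \<partial>M) / 2) \<ge> (\<integral>x. real (Y x) \<partial>M)"
      unfolding Q_def[symmetric] \<mu>_def[symmetric] by (simp add: real_le_rsqrt)
  next
    assume H: "\<forall>t::nat. measure M {x \<in> space M. Y x > t} > 0 \<longrightarrow>
              mean_excess M Y (real t) \<le> (\<integral>x. real (Y x) \<partial>M) + 1/2"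
    have "integral\<^sup>L M (g t) \<le> (\<mu> + 1/2) * measure M (S t)" for t
    proof (cases "measure M (S t) = 0")
      case True then show ?thesis by (simp add: zero)
    next
      case False
      then have "measure M (S t) > 0" using measure_nonneg[of M "S t"] by linarith
      with H[rule_format, of t] show ?thesis by (simp add: S_eq me \<mu>_def pos_divide_le_eq)
    qed
    then have "(Q + \<mu>) / 2 \<le> (\<mu> + 1/2) * \<mu>" using sums_le[OF _ gsum csum] by blast
    then have "Q / 2 \<le> \<mu>\<^sup>2" by (simp add: power2_eq_square algebra_simps)
    then have "sqrt (Q / 2) \<le> sqrt (\<mu>\<^sup>2)" by (rule real_sqrt_le_mono)
    then show "sqrt ((\<integral>x. (real (Y x))\<^sup>2 \<partial>M) / 2) \<le> (\<integral>x. real (Y x) \<partial>M)"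
      unfolding Q_def[symmetric] \<mu>_def[symmetric] using \<mu>nn by simp
  qed
qed

end
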